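(* Let $n\ge1$ and let $x\in\mathcal{A}_n(\{0121,0112\})$. Let $x^+$ denote the subsequence of positive entries of $x$. Then exactly one of the following holds: (label $(0)$) $x=0^n$; (label $(01)$) $x^+=12\cdots m$ for some $m\ge1$; (label $(011)$) $x^+=12\cdots(m-1)m^s$ for some $m\ge1$ and $s\ge2$. Moreover, writing $m=\max(x)$, the letters $t$ for which the sequence $xt$ (obtained by appending $t$) lies in $\mathcal{A}_{n+1}(\{0121,0112\})$, together with the labels of the resulting $xt$, are exactly: - if $x$ has label $(0)$: $t=0$ (label $(0)$) and $t=1$ (label $(01)$); - if $x$ has label $(01)$: $t=0$ (label $(01)$), $t=m$ (label $(011)$), and $t=m+1$ (label $(01)$); - if $x$ has label $(011)$: $t=0$ and $t=m$, both giving label $(011)$.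
   Context: An ascent in an integer sequence $s_1\cdots s_m$ is an index $j$ with $s_j<s_{j+1}$; $\mathrm{asc}$ denotes the number of ascents. An ascent sequence is a sequence $x_1\cdots x_n$ of nonnegative integers with $x_1=0$ and $x_i\le 1+\mathrm{asc}(x_1\cdots x_{i-1})$ for all $i\ge2$. The reduction $\mathrm{red}(w)$ of an integer sequence $w$ replaces the $i$-th smallest distinct letter of $w$ by $i-1$; a pattern is a reduced sequence. A sequence $x$ contains a pattern $p=p_1\cdots p_k$ if there are indices $i_1<\cdots<i_k$ with $\mathrm{red}(x_{i_1}\cdots x_{i_k})=p$; otherwise $x$ avoids $p$. For a finite set $P$ of patterns, $\mathcal{A}_n(P)$ denotes the set of ascent sequences of length $n$ avoiding every pattern in $P$. Here $c^s$ denotes $s$ consecutive copies of the letter $c$. *)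

theory Defs
  imports Main "HOL-Library.Sublist"
begin

definition asc :: "nat list \<Rightarrow> nat" where
  "asc s = card {j. Suc j < length s \<and> s ! j < s ! Suc j}"

definition ascent_seq :: "nat list \<Rightarrow> bool" where
  "ascent_seq x \<longleftrightarrow> (x \<noteq> [] \<longrightarrow> x ! 0 = 0) \<and>
     (\<forall>i. 1 \<le> i \<and> i < length x \<longrightarrow> x ! i \<le> 1 + asc (take i x))"

definition red :: "nat list \<Rightarrow> nat list" where
  "red w = map (\<lambda>a. card {b \<in> set w. b < a}) w"

definition contains :: "nat list \<Rightarrow> nat list \<Rightarrow> bool" where
  "contains x p \<longleftrightarrow> (\<exists>ys. subseq ys x \<and> red ys = p)"

definition avoids_all :: "nat list \<Rightarrow> nat list set \<Rightarrow> bool" where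
  "avoids_all x P \<longleftrightarrow> (\<forall>p\<in>P. \<not> contains x p)"

definition Asc_av :: "nat \<Rightarrow> nat list set \<Rightarrow> nat list set" where
  "Asc_av n P = {x. length x = n \<and> ascent_seq x \<and> avoids_all x P}"

datatype label = L0 | L01 | L011

definition pos_part :: "nat list \<Rightarrow> nat list" where
  "pos_part x = filter (\<lambda>a. 0 < a) x"

fun has_label :: "nat list \<Rightarrow> label \<Rightarrow> bool" where
  "has_label x L0 \<longleftrightarrow> x = replicate (length x) 0"
| "has_label x L01 \<longleftrightarrow> (\<exists>m\<ge>1. pos_part x = [1..<m+1])"
| "has_label x L011 \<longleftrightarrow> (\<exists>m\<ge>1. \<exists>s\<ge>2. pos_part x = [1..<m] @ replicate s m)"

end

theory Submission
  imports Defs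
begin

lemma subseq_sorted: "subseq xs ys \<Longrightarrow> sorted ys \<Longrightarrow> sorted xs"
  by (metis subseq_conv_nths sorted_nths)

lemma subseq_distinct: "subseq xs ys \<Longrightarrow> distinct ys \<Longrightarrow> distinct xs"
  by (metis subseq_conv_nths distinct_nthsI)

lemma red_card_lt:
  fixes w :: "nat list"
  assumes "u \<in> set w" "v \<in> set w"
  shows "card {e \<in> set w. e < u} < card {e \<in> set w. e < v} \<longleftrightarrow> u < v"
proof
  assume "u < v"
  then have "{e \<in> set w. e < u} \<subset> {e \<in> set w. e < v}" using assms by auto
  then show "card {e \<in> set w. e < u} < card {e \<in> set w. e < v}"
    by (simp add: psubset_card_mono)
next
  assume h: "card {e \<in> set w. e < u} < card {e \<in> set w. e < v}"
  show "u < v"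
  proof (rule ccontr)
    assume "\<not> u < v"
    then have "{e \<in> set w. e < v} \<subseteq> {e \<in> set w. e < u}" by auto
    then have "card {e \<in> set w. e < v} \<le> card {e \<in> set w. e < u}"
      by (simp add: card_mono)
    with h show False by simp
  qed
qed

lemma len4: "length ys = 4 \<Longrightarrow> \<exists>a b c d. ys = [a,b,c,d]"
  by (cases ys; cases "tl ys"; cases "tl (tl ys)"; cases "tl (tl (tl ys))"; auto)

lemma contains_0121_D:
  assumes "contains y [0,1,2,1]"
  shows "\<exists>b c. 0 < b \<and> b < c \<and> subseq [b,c,b] (pos_part y)"
proof -
  obtain ys where s: "subseq ys y" and r: "red ys = [0,1,2,1]"
    using assms unfolding contains_def by blast
  have "length ys = 4" proof -
    have "length ys = length (red ys)" unfolding red_def by simp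
    then show ?thesis using r by simp
  qed
  then obtain a b c d where ys: "ys = [a,b,c,d]" using len4 by blast
  let ?f = "\<lambda>v. card {e \<in> set ys. e < v}"
  have fa: "?f a = 0" "?f b = 1" "?f c = 2" "?f d = 1" using r ys unfolding red_def by auto
  have ab: "a < b" using red_card_lt[of a ys b] fa ys by simp
  have bc: "b < c" using red_card_lt[of b ys c] fa ys by simp
  have db: "\<not> d < b" using red_card_lt[of d ys b] fa ys by simp
  have bd: "\<not> b < d" using red_card_lt[of b ys d] fa ys by simp
  have "d = b" using db bd by simp
  have "subseq [b,c,b] ys" using ys \<open>d = b\<close> by simp
  then have "subseq [b,c,b] y" using s by (meson subseq_order.trans)
  then have "subseq (filter (\<lambda>a. 0 < a) [b,c,b]) (pos_part y)"
    unfolding pos_part_def by (rule subseq_filter)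
  moreover have "filter (\<lambda>a. 0 < a) [b,c,b] = [b,c,b]" using ab bc by auto
  ultimately show ?thesis using ab bc by (metis gr_zeroI less_nat_zero_code)
qed

lemma contains_0112_D:
  assumes "contains y [0,1,1,2]"
  shows "\<exists>b c. 0 < b \<and> b < c \<and> subseq [b,b,c] (pos_part y)"
proof -
  obtain ys where s: "subseq ys y" and r: "red ys = [0,1,1,2]"
    using assms unfolding contains_def by blast
  have "length ys = 4" proof -
    have "length ys = length (red ys)" unfolding red_def by simp
    then show ?thesis using r by simp
  qed
  then obtain a b c d where ys: "ys = [a,b,c,d]" using len4 by blast
  let ?f = "\<lambda>v. card {e \<in> set ys. e < v}"
  have fa: "?f a = 0" "?f b = 1" "?f c = 1" "?f d = 2" using r ys unfolding red_def by auto
  have ab: "a < b" using red_card_lt[of a ys b] fa ys by simp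
  have bd: "b < d" using red_card_lt[of b ys d] fa ys by simp
  have cb: "\<not> c < b" using red_card_lt[of c ys b] fa ys by simp
  have bc: "\<not> b < c" using red_card_lt[of b ys c] fa ys by simp
  have "c = b" using cb bc by simp
  have "subseq [b,b,d] ys" using ys \<open>c = b\<close> by simp
  then have "subseq [b,b,d] y" using s by (meson subseq_order.trans)
  then have "subseq (filter (\<lambda>a. 0 < a) [b,b,d]) (pos_part y)"
    unfolding pos_part_def by (rule subseq_filter)
  moreover have "filter (\<lambda>a. 0 < a) [b,b,d] = [b,b,d]" using ab bd by auto
  ultimately show ?thesis using ab bd by (metis gr_zeroI less_nat_zero_code)
qed



lemma subseq_set: "subseq xs ys \<Longrightarrow> set xs \<subseteq> set ys"
  by (metis subseq_conv_nths set_nths_subset)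

lemma avoid_of_pos:
  assumes "pos_part z = [1..<m+1] \<or> pos_part z = [1..<m] @ replicate s m"
  shows "avoids_all z {[0,1,2,1],[0,1,1,2]}"
proof -
  have srt: "sorted (pos_part z)" using assms
    by (auto simp: sorted_append)
  have n1: "\<not> contains z [0,1,2,1]"
  proof
    assume "contains z [0,1,2,1]"
    then obtain b c where "0 < b" "b < c" "subseq [b,c,b] (pos_part z)"
      using contains_0121_D by blast
    then show False using subseq_sorted[OF _ srt] by fastforce
  qed
  have n2: "\<not> contains z [0,1,1,2]"
  proof
    assume "contains z [0,1,1,2]"
    then obtain b c where bc: "0 < b" "b < c" and sq: "subseq [b,b,c] (pos_part z)"
      using contains_0112_D by blast
    show False
    proof (cases "pos_part z = [1..<m+1]")
      case True
      then have "distinct (pos_part z)" by simp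
      then have "distinct [b,b,c]" using subseq_distinct[OF sq] by blast
      then show False by simp
    next
      case False
      then have L: "pos_part z = [1..<m] @ replicate s m" using assms by blast
      have "c \<in> set (pos_part z)" using subseq_set[OF sq] by simp
      then have "c \<le> m" using L by (auto split: if_splits)
      have "subseq (filter (\<lambda>v. v < m) [b,b,c]) (filter (\<lambda>v. v < m) (pos_part z))"
        using sq by (rule subseq_filter)
      moreover have "filter (\<lambda>v. v < m) (pos_part z) = [1..<m]" using L
        by (simp add: filter_empty_conv)
      moreover have "filter (\<lambda>v. v < m) [b,b,c] = b # b # filter (\<lambda>v. v < m) [c]"
        using bc \<open>c \<le> m\<close> by simp
      ultimately have "distinct (b # b # filter (\<lambda>v. v < m) [c])"
        using subseq_distinct by (metis distinct_upt)
      then show False by simp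
    qed
  qed
  show ?thesis unfolding avoids_all_def using n1 n2 by blast
qed

lemma red_0bcb: "0 < b \<Longrightarrow> b < (c::nat) \<Longrightarrow> red [0,b,c,b] = [0,1,2,1]"
proof -
  assume h: "0 < b" "b < c"
  have 1: "{e \<in> set [0,b,c,b]. e < 0} = {}" by auto
  have 2: "{e \<in> set [0,b,c,b]. e < b} = {0}" using h by auto
  have 3: "{e \<in> set [0,b,c,b]. e < c} = {0,b}" using h by auto
  show ?thesis unfolding red_def using h by (simp only: list.map 1 2 3) simp
qed

lemma red_0bbc: "0 < b \<Longrightarrow> b < (c::nat) \<Longrightarrow> red [0,b,b,c] = [0,1,1,2]"
proof -
  assume h: "0 < b" "b < c"
  have 1: "{e \<in> set [0,b,b,c]. e < 0} = {}" by auto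
  have 2: "{e \<in> set [0,b,b,c]. e < b} = {0}" using h by auto
  have 3: "{e \<in> set [0,b,b,c]. e < c} = {0,b}" using h by auto
  show ?thesis unfolding red_def using h by (simp only: list.map 1 2 3) simp
qed

lemma contains_0121_I:
  assumes "x ! 0 = 0" "x \<noteq> []" "0 < b" "b < c" "subseq [b,c,b] (pos_part x)"
  shows "contains x [0,1,2,1]"
proof -
  obtain r where x: "x = 0 # r" using assms(1,2) by (cases x) auto
  have "pos_part x = filter (\<lambda>a. 0 < a) r" using x unfolding pos_part_def by simp
  then have "subseq [b,c,b] r" using assms(5)
    by (metis subseq_filter_left subseq_order.trans)
  then have "subseq [0,b,c,b] x" using x by simp
  then show ?thesis unfolding contains_def using red_0bcb[OF assms(3,4)] by blast
qed

lemma contains_0112_I: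
  assumes "x ! 0 = 0" "x \<noteq> []" "0 < b" "b < c" "subseq [b,b,c] (pos_part x)"
  shows "contains x [0,1,1,2]"
proof -
  obtain r where x: "x = 0 # r" using assms(1,2) by (cases x) auto
  have "pos_part x = filter (\<lambda>a. 0 < a) r" using x unfolding pos_part_def by simp
  then have "subseq [b,b,c] r" using assms(5)
    by (metis subseq_filter_left subseq_order.trans)
  then have "subseq [0,b,b,c] x" using x by simp
  then show ?thesis unfolding contains_def using red_0bbc[OF assms(3,4)] by blast
qed

lemma asc_snoc:
  "asc (x @ [t]) = asc x + (if x \<noteq> [] \<and> last x < t then 1 else 0)"
proof -
  let ?A = "{j. Suc j < length x \<and> x ! j < x ! Suc j}"
  have eq: "{j. Suc j < length (x @ [t]) \<and> (x @ [t]) ! j < (x @ [t]) ! Suc j}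
      = ?A \<union> (if x \<noteq> [] \<and> last x < t then {length x - 1} else {})"
  proof (cases "x = []")
    case True then show ?thesis by simp
  next
    case False
    show ?thesis
    proof (intro set_eqI iffI)
      fix j assume j: "j \<in> {j. Suc j < length (x @ [t]) \<and> (x @ [t]) ! j < (x @ [t]) ! Suc j}"
      show "j \<in> ?A \<union> (if x \<noteq> [] \<and> last x < t then {length x - 1} else {})"
      proof (cases "Suc j < length x")
        case True then show ?thesis using j by (simp add: nth_append)
      next
        case F: False
        have "Suc j < Suc (length x)" using j by simp
        then have "j = length x - 1" using F by linarith
        then show ?thesis using j False F by (simp add: nth_append last_conv_nth)
      qed
    next
      fix j assume j: "j \<in> ?A \<union> (if x \<noteq> [] \<and> last x < t then {length x - 1} else {})"
      show "j \<in> {j. Suc j < length (x @ [t]) \<and> (x @ [t]) ! j < (x @ [t]) ! Suc j}"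
      proof (cases "j \<in> ?A")
        case True then show ?thesis by (simp add: nth_append)
      next
        case F: False
        then have "j = length x - 1" "last x < t" using j by (auto split: if_splits)
        then show ?thesis using False by (simp add: nth_append last_conv_nth)
      qed
    qed
  qed
  have fin: "finite ?A" by (rule finite_subset[of _ "{..<length x}"]) auto
  have "length x - 1 \<notin> ?A" by auto
  then show ?thesis unfolding asc_def eq using fin by auto
qed

lemma ascent_snoc:
  assumes "x \<noteq> []"
  shows "ascent_seq (x @ [t]) \<longleftrightarrow> ascent_seq x \<and> t \<le> 1 + asc x"
proof -
  have a: "(x @ [t]) ! 0 = x ! 0" using assms by (simp add: nth_append)
  have "(\<forall>i. 1 \<le> i \<and> i < length (x @ [t]) \<longrightarrow> (x @ [t]) ! i \<le> 1 + asc (take i (x @ [t])))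
    \<longleftrightarrow> (\<forall>i. 1 \<le> i \<and> i < length x \<longrightarrow> x ! i \<le> 1 + asc (take i x)) \<and> t \<le> 1 + asc x"
    (is "?L \<longleftrightarrow> ?R")
  proof
    assume L: ?L
    have "\<forall>i. 1 \<le> i \<and> i < length x \<longrightarrow> x ! i \<le> 1 + asc (take i x)"
    proof (intro allI impI)
      fix i assume "1 \<le> i \<and> i < length x"
      then show "x ! i \<le> 1 + asc (take i x)" using L[rule_format, of i]
        by (simp add: nth_append)
    qed
    moreover have "t \<le> 1 + asc x" using L[rule_format, of "length x"] assms
      by (simp add: Suc_leI)
    ultimately show ?R by blast
  next
    assume R: ?R
    show ?L
    proof (intro allI impI)
      fix i assume i: "1 \<le> i \<and> i < length (x @ [t])"
      show "(x @ [t]) ! i \<le> 1 + asc (take i (x @ [t]))"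
      proof (cases "i < length x")
        case True then show ?thesis using R i by (simp add: nth_append)
      next
        case False
        then have "i = length x" using i by simp
        then show ?thesis using R by simp
      qed
    qed
  qed
  then show ?thesis unfolding ascent_seq_def using a assms by simp
qed


lemma upt_split3: "i \<le> j \<Longrightarrow> j \<le> k \<Longrightarrow> [i..<k] = [i..<j] @ [j..<k]"
proof -
  assume h: "i \<le> j" "j \<le> k"
  then obtain d where d: "k = j + d" using le_Suc_ex by blast
  show ?thesis unfolding d by (rule upt_add_eq_append[OF h(1)])
qed

lemma sq_a: "1 \<le> t \<Longrightarrow> t < m \<Longrightarrow> subseq [t,m,t] ([1..<m+1] @ [t])"
proof -
  assume h: "1 \<le> t" "t < m"
  have e1: "[1..<m+1] = [1..<m] @ [m]" using h by simp
  have e2: "[1..<m] = [1..<t] @ [t..<m]" using h by (intro upt_split3) auto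
  have e3: "[t..<m] = t # [Suc t..<m]" using h by (simp add: upt_conv_Cons)
  have "subseq [m,t] ([Suc t..<m] @ [m,t])" by (rule subseq_drop_many) simp
  then have "subseq [t,m,t] (t # [Suc t..<m] @ [m,t])" by simp
  then show ?thesis unfolding e1 e2 e3 by (simp add: subseq_drop_many)
qed

lemma sq_b: "1 \<le> t \<Longrightarrow> t < m \<Longrightarrow> 2 \<le> s \<Longrightarrow> subseq [t,m,t] ([1..<m] @ replicate s m @ [t])"
proof -
  assume h: "1 \<le> t" "t < m" "2 \<le> s"
  obtain r where r: "s = Suc (Suc r)" using h(3) by (metis add_2_eq_Suc le_Suc_ex)
  have e2: "[1..<m] = [1..<t] @ [t..<m]" using h by (intro upt_split3) auto
  have e3: "[t..<m] = t # [Suc t..<m]" using h by (simp add: upt_conv_Cons)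
  have "subseq [m,t] ([Suc t..<m] @ m # m # replicate r m @ [t])"
    by (rule subseq_drop_many) (simp add: subseq_drop_many subseq_singleton_left)
  then have "subseq [t,m,t] (t # [Suc t..<m] @ m # m # replicate r m @ [t])" by simp
  then show ?thesis unfolding e2 e3 r by (simp add: subseq_drop_many)
qed

lemma sq_c: "m < t \<Longrightarrow> 2 \<le> s \<Longrightarrow> subseq [m,m,t] ([1..<m] @ replicate s m @ [t])"
proof -
  assume h: "m < t" "2 \<le> s"
  obtain r where r: "s = Suc (Suc r)" using h(2) by (metis add_2_eq_Suc le_Suc_ex)
  show ?thesis unfolding r by (rule subseq_drop_many) (simp add: subseq_singleton_left)
qed

abbreviation "PP \<equiv> {[0,1,2,1],[0,1,1,2]} :: nat list set"

lemma pos_snoc: "pos_part (x @ [t]) = pos_part x @ (if 0 < t then [t] else [])"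
  unfolding pos_part_def by simp

lemma mem_snoc:
  assumes "x \<in> Asc_av k PP" "x \<noteq> []"
  shows "x @ [t] \<in> Asc_av (Suc k) PP \<longleftrightarrow> t \<le> 1 + asc x \<and> avoids_all (x @ [t]) PP"
proof -
  have "length x = k" "ascent_seq x" using assms(1) unfolding Asc_av_def by auto
  have "x @ [t] \<in> Asc_av (Suc k) PP \<longleftrightarrow> ascent_seq (x @ [t]) \<and> avoids_all (x @ [t]) PP"
    using \<open>length x = k\<close> unfolding Asc_av_def by simp
  then show ?thesis using ascent_snoc[OF assms(2)] \<open>ascent_seq x\<close> by simp
qed

lemma first0: "x \<in> Asc_av k PP \<Longrightarrow> x \<noteq> [] \<Longrightarrow> (x @ [t]) ! 0 = 0"
proof -
  assume a: "x \<in> Asc_av k PP" "x \<noteq> []"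
  then have "x ! 0 = 0" unfolding Asc_av_def ascent_seq_def by simp
  then show ?thesis using a(2) by (simp add: nth_append)
qed

lemma ext_L0:
  assumes "x \<in> Asc_av k PP" "x \<noteq> []" "pos_part x = []" "asc x = 0"
  shows "x @ [t] \<in> Asc_av (Suc k) PP \<longleftrightarrow> t \<in> {0, 1}"
proof
  assume "x @ [t] \<in> Asc_av (Suc k) PP"
  then have "t \<le> 1" using mem_snoc[OF assms(1,2)] assms(4) by simp
  then show "t \<in> {0,1}" by auto
next
  assume t: "t \<in> {0,1}"
  have "pos_part (x @ [t]) = [1..<0+1] \<or> pos_part (x @ [t]) = [1..<1+1]"
  proof (cases "t = 0")
    case True then show ?thesis using assms(3) by (simp add: pos_snoc)
  next
    case False then have "t = 1" using t by simp
    then show ?thesis using assms(3) by (simp add: pos_snoc)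
  qed
  then have "avoids_all (x @ [t]) PP" using avoid_of_pos by blast
  moreover have "t \<le> 1 + asc x" using t assms(4) by auto
  ultimately show "x @ [t] \<in> Asc_av (Suc k) PP" using mem_snoc[OF assms(1,2)] by blast
qed

lemma ext_L01:
  assumes "x \<in> Asc_av k PP" "x \<noteq> []" "pos_part x = [1..<m+1]" "asc x = m" "1 \<le> m"
  shows "x @ [t] \<in> Asc_av (Suc k) PP \<longleftrightarrow> t \<in> {0, m, m+1}"
proof
  assume A: "x @ [t] \<in> Asc_av (Suc k) PP"
  then have le: "t \<le> m + 1" and av: "avoids_all (x @ [t]) PP"
    using mem_snoc[OF assms(1,2)] assms(4) by simp_all
  have "\<not> (0 < t \<and> t < m)"
  proof
    assume h: "0 < t \<and> t < m"
    then have "subseq [t,m,t] (pos_part (x @ [t]))" using sq_a[of t m] assms(3)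
      by (simp add: pos_snoc)
    then have "contains (x @ [t]) [0,1,2,1]"
      using contains_0121_I[of "x@[t]" t m] first0[OF assms(1,2), of t] h by simp
    then show False using av unfolding avoids_all_def by simp
  qed
  then show "t \<in> {0, m, m+1}" using le by auto
next
  assume t: "t \<in> {0, m, m+1}"
  have "pos_part (x @ [t]) = [1..<m+1] \<or> pos_part (x @ [t]) = [1..<m] @ replicate 2 m
      \<or> pos_part (x @ [t]) = [1..<(m+1)+1]"
  proof -
    consider "t = 0" | "t = m" | "t = m + 1" using t by blast
    then show ?thesis
    proof cases
      case 1 then show ?thesis using assms(3) by (simp add: pos_snoc)
    next
      case 2
      have "[1..<m+1] = [1..<m] @ [m]" using assms(5) by simp
      then show ?thesis using 2 assms(3,5) by (simp add: pos_snoc numeral_2_eq_2)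
    next
      case 3 then show ?thesis using assms(3) by (simp add: pos_snoc)
    qed
  qed
  then have "avoids_all (x @ [t]) PP" using avoid_of_pos by blast
  moreover have "t \<le> 1 + asc x" using t assms(4) by auto
  ultimately show "x @ [t] \<in> Asc_av (Suc k) PP" using mem_snoc[OF assms(1,2)] by blast
qed

lemma ext_L011:
  assumes "x \<in> Asc_av k PP" "x \<noteq> []" "pos_part x = [1..<m] @ replicate s m" "m \<le> asc x"
    "1 \<le> m" "2 \<le> s"
  shows "x @ [t] \<in> Asc_av (Suc k) PP \<longleftrightarrow> t \<in> {0, m}"
proof
  assume A: "x @ [t] \<in> Asc_av (Suc k) PP"
  then have av: "avoids_all (x @ [t]) PP"
    using mem_snoc[OF assms(1,2)] by simp
  have "\<not> (0 < t \<and> t < m)"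
  proof
    assume h: "0 < t \<and> t < m"
    then have "subseq [t,m,t] (pos_part (x @ [t]))" using sq_b[of t m s] assms(3,6)
      by (simp add: pos_snoc)
    then have "contains (x @ [t]) [0,1,2,1]"
      using contains_0121_I[of "x@[t]" t m] first0[OF assms(1,2), of t] h by simp
    then show False using av unfolding avoids_all_def by simp
  qed
  moreover have "\<not> m < t"
  proof
    assume h: "m < t"
    then have "subseq [m,m,t] (pos_part (x @ [t]))" using sq_c[of m t s] assms(3,6)
      by (simp add: pos_snoc)
    then have "contains (x @ [t]) [0,1,1,2]"
      using contains_0112_I[of "x@[t]" m t] first0[OF assms(1,2), of t] h assms(5) by simp
    then show False using av unfolding avoids_all_def by simp
  qed
  ultimately show "t \<in> {0, m}" by auto
next
  assume t: "t \<in> {0, m}"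
  have "pos_part (x @ [t]) = [1..<m] @ replicate s m \<or> pos_part (x @ [t]) = [1..<m] @ replicate (Suc s) m"
  proof (cases "t = 0")
    case True then show ?thesis using assms(3) by (simp add: pos_snoc)
  next
    case False then have "t = m" using t by simp
    then show ?thesis using assms(3,5) by (simp add: pos_snoc replicate_append_same)
  qed
  then have "avoids_all (x @ [t]) PP" using avoid_of_pos by blast
  moreover have "t \<le> 1 + asc x" using t assms(4) by auto
  ultimately show "x @ [t] \<in> Asc_av (Suc k) PP" using mem_snoc[OF assms(1,2)] by blast
qed

definition inv3 :: "nat list \<Rightarrow> bool" where
  "inv3 x \<longleftrightarrow> (x = replicate (length x) 0 \<and> asc x = 0)
     \<or> (\<exists>m\<ge>1. pos_part x = [1..<m+1] \<and> asc x = m)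
     \<or> (\<exists>m\<ge>1. \<exists>s\<ge>2. pos_part x = [1..<m] @ replicate s m \<and> m \<le> asc x)"

lemma pos_rep: "pos_part (replicate k 0) = []"
  unfolding pos_part_def by (induct k) auto

lemma contains_snoc: "contains y p \<Longrightarrow> contains (y @ [t]) p"
  unfolding contains_def by (blast intro: subseq_rev_drop_many)

lemma prefix_mem:
  assumes "y @ [t] \<in> Asc_av k PP" "y \<noteq> []"
  shows "y \<in> Asc_av (k - 1) PP"
proof -
  have "ascent_seq (y @ [t])" "avoids_all (y @ [t]) PP" "length y + 1 = k"
    using assms(1) unfolding Asc_av_def by auto
  then show ?thesis using ascent_snoc[OF assms(2)] contains_snoc
    unfolding Asc_av_def avoids_all_def by fastforce
qed

lemma set_pos: "a \<in> set y \<Longrightarrow> a = 0 \<or> a \<in> set (pos_part y)"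
  unfolding pos_part_def by auto

lemma inv_all: "x \<in> Asc_av k PP \<Longrightarrow> x \<noteq> [] \<Longrightarrow> inv3 x"
proof (induction x arbitrary: k rule: rev_induct)
  case Nil then show ?case by simp
next
  case (snoc t y)
  show ?case
  proof (cases "y = []")
    case True
    then have "t = 0" using snoc.prems(1) unfolding Asc_av_def ascent_seq_def by simp
    moreover have "asc [0] = 0" unfolding asc_def by simp
    ultimately show ?thesis using True unfolding inv3_def by simp
  next
    case ne: False
    have ym: "y \<in> Asc_av (k - 1) PP" using prefix_mem[OF snoc.prems(1) ne] .
    have kk: "Suc (k - 1) = k" using snoc.prems(1) unfolding Asc_av_def by auto
    have tm: "t \<in> {t. y @ [t] \<in> Asc_av (Suc (k - 1)) PP}" using snoc.prems(1) kk by simp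
    have iy: "inv3 y" using snoc.IH[OF ym ne] .
    have ascs: "asc (y @ [t]) = asc y + (if last y < t then 1 else 0)"
      using asc_snoc[of y t] ne by simp
    show ?thesis
      using iy[unfolded inv3_def]
    proof (elim disjE exE conjE)
      assume y0: "y = replicate (length y) 0" and a0: "asc y = 0"
      obtain L where yL: "y = replicate L 0" using y0 by blast
      have p0: "pos_part y = []" unfolding yL by (rule pos_rep)
      have "t \<in> {0,1}" using ext_L0[OF ym ne p0 a0] tm by simp
      moreover have "last y = 0" using ne unfolding yL by simp
      ultimately consider "t = 0" "last y = 0" | "t = 1" "last y = 0" by blast
      then show ?thesis
      proof cases
        case 1
        then have "y @ [t] = replicate (length (y @ [t])) 0" "asc (y @ [t]) = 0"
          using ascs a0 unfolding yL by (simp_all add: replicate_append_same)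
        then show ?thesis unfolding inv3_def by blast
      next
        case 2
        then have "pos_part (y @ [t]) = [1..<1+1]" "asc (y @ [t]) = 1"
          using p0 ascs a0 by (auto simp: pos_snoc)
        then show ?thesis unfolding inv3_def by blast
      qed
    next
      fix m assume m1: "1 \<le> m" and p: "pos_part y = [1..<m+1]" and a: "asc y = m"
      have "t \<in> {0,m,m+1}" using ext_L01[OF ym ne p a m1] tm by simp
      have lastle: "last y \<le> m"
      proof -
        have "last y \<in> set y" using ne by simp
        then show ?thesis using set_pos[of "last y" y] p by auto
      qed
      consider "t = 0" | "t = m" | "t = m + 1" using \<open>t \<in> {0,m,m+1}\<close> by blast
      then show ?thesis
      proof cases
        case 1
        then have "pos_part (y @ [t]) = [1..<m+1]" "asc (y @ [t]) = m"
          using p ascs a by (auto simp: pos_snoc)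
        then show ?thesis unfolding inv3_def using m1 by blast
      next
        case 2
        then have "pos_part (y @ [t]) = [1..<m] @ replicate 2 m" "m \<le> asc (y @ [t])"
          using p ascs a m1 by (auto simp: pos_snoc numeral_2_eq_2)
        then show ?thesis unfolding inv3_def using m1 by blast
      next
        case 3
        then have "pos_part (y @ [t]) = [1..<(m+1)+1]" "asc (y @ [t]) = m + 1"
          using p ascs a m1 lastle by (auto simp: pos_snoc)
        moreover have "(1::nat) \<le> m + 1" by simp
        ultimately show ?thesis unfolding inv3_def by blast
      qed
    next
      fix m s assume m1: "1 \<le> m" and s2: "2 \<le> s" and p: "pos_part y = [1..<m] @ replicate s m"
        and a: "m \<le> asc y"
      have "t \<in> {0,m}" using ext_L011[OF ym ne p a m1 s2] tm by simp
      then consider "t = 0" | "t = m" by blast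
      then show ?thesis
      proof cases
        case 1
        then have "pos_part (y @ [t]) = [1..<m] @ replicate s m" "m \<le> asc (y @ [t])"
          using p ascs a by (auto simp: pos_snoc)
        then show ?thesis unfolding inv3_def using m1 s2 by blast
      next
        case 2
        then have "pos_part (y @ [t]) = [1..<m] @ replicate (Suc s) m" "m \<le> asc (y @ [t])"
          using p ascs a m1 by (auto simp: pos_snoc replicate_append_same)
        then show ?thesis unfolding inv3_def using m1 s2
          by (metis le_SucI)
      qed
    qed
  qed
qed


lemma not_L0: "pos_part z \<noteq> [] \<Longrightarrow> \<not> has_label z L0"
proof
  assume "pos_part z \<noteq> []" "has_label z L0"
  then obtain L where "z = replicate L 0" by auto
  then show False using \<open>pos_part z \<noteq> []\<close> pos_rep by simp
qed

lemma not_both: "2 \<le> s \<Longrightarrow> [1..<m+1] \<noteq> [1..<m'] @ replicate s m'"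
proof
  assume h: "2 \<le> s" "[1..<m+1] = [1..<m'] @ replicate s m'"
  obtain r where "s = Suc (Suc r)" using h(1) by (metis add_2_eq_Suc le_Suc_ex)
  then have "\<not> distinct ([1..<m'] @ replicate s m')" by simp
  moreover have "distinct [1..<m+1]" by simp
  ultimately show False using h(2) by simp
qed

lemma set_x0: "x \<noteq> [] \<Longrightarrow> x ! 0 = 0 \<Longrightarrow> set x = insert 0 (set (pos_part x))"
proof -
  assume a: "x \<noteq> []" "x ! 0 = 0"
  then have "0 \<in> set x" by (metis nth_mem length_greater_0_conv)
  then show ?thesis unfolding pos_part_def by auto
qed

lemma max_L01: "1 \<le> m \<Longrightarrow> Max (insert 0 (set [1..<m+1])) = (m::nat)"
  by (rule Max_eqI) auto

lemma max_L011: "1 \<le> m \<Longrightarrow> 2 \<le> s \<Longrightarrow> Max (insert 0 (set ([1..<m] @ replicate s m))) = (m::nat)"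
  by (rule Max_eqI) auto

theorem lemma3p3:
  fixes n :: nat and x :: "nat list"
  defines "P \<equiv> {[0,1,2,1], [0,1,1,2]}"
  assumes "n \<ge> 1" and "x \<in> Asc_av n P"
  shows "(\<exists>!L. has_label x L) \<and>
    (let m = Max (set x) in
      (has_label x L0 \<longrightarrow>
         {t. x @ [t] \<in> Asc_av (n+1) P} = {0, 1} \<and>
         has_label (x @ [0]) L0 \<and> has_label (x @ [1]) L01) \<and>
      (has_label x L01 \<longrightarrow>
         {t. x @ [t] \<in> Asc_av (n+1) P} = {0, m, m+1} \<and>
         has_label (x @ [0]) L01 \<and> has_label (x @ [m]) L011 \<and> has_label (x @ [m+1]) L01) \<and>
      (has_label x L011 \<longrightarrow>
         {t. x @ [t] \<in> Asc_av (n+1) P} = {0, m} \<and>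
         has_label (x @ [0]) L011 \<and> has_label (x @ [m]) L011))"
proof -
  have PP: "P = PP" unfolding P_def by simp
  have xm: "x \<in> Asc_av n PP" using assms(3) PP by simp
  have ne: "x \<noteq> []" using xm assms(2) unfolding Asc_av_def by auto
  have x0: "x ! 0 = 0" using xm ne unfolding Asc_av_def ascent_seq_def by simp
  have sx: "set x = insert 0 (set (pos_part x))" using set_x0[OF ne x0] .
  have iv: "inv3 x" using inv_all[OF xm ne] .
  have S: "\<And>t. x @ [t] \<in> Asc_av (n+1) P \<longleftrightarrow> x @ [t] \<in> Asc_av (Suc n) PP" using PP by simp
  show ?thesis
    using iv[unfolded inv3_def]
  proof (elim disjE exE conjE)
    assume y0: "x = replicate (length x) 0" and a0: "asc x = 0"
    obtain L where yL: "x = replicate L 0" using y0 by blast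
    have p0: "pos_part x = []" unfolding yL by (rule pos_rep)
    have h0: "has_label x L0" using y0 by simp
    have h1: "\<not> has_label x L01" using p0 by simp
    have h2: "\<not> has_label x L011" using p0 by simp
    have u: "\<exists>!L. has_label x L"
    proof (rule ex1I[of _ L0])
      show "has_label x L0" by (rule h0)
    next
      fix L' assume "has_label x L'" then show "L' = L0" using h1 h2 by (cases L') auto
    qed
    have st: "{t. x @ [t] \<in> Asc_av (n+1) P} = {0, 1}"
      using ext_L0[OF xm ne p0 a0] S by blast
    have "has_label (x @ [0]) L0" unfolding yL by (simp add: replicate_append_same)
    moreover have "pos_part (x @ [1]) = [1..<1+1]" using p0 by (simp add: pos_snoc)
    then have "has_label (x @ [1]) L01" by (metis has_label.simps(2) le_refl)
    ultimately show ?thesis unfolding Let_def using u st h1 h2 h0 by blast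
  next
    fix m assume m1: "1 \<le> m" and p: "pos_part x = [1..<m+1]" and a: "asc x = m"
    have h0: "\<not> has_label x L0" using p m1 not_L0 by simp
    have h1: "has_label x L01" using p m1 by auto
    have h2: "\<not> has_label x L011" using p not_both by auto
    have u: "\<exists>!L. has_label x L"
    proof (rule ex1I[of _ L01])
      show "has_label x L01" by (rule h1)
    next
      fix L' assume "has_label x L'" then show "L' = L01" using h0 h2 by (cases L') auto
    qed
    have mx: "Max (set x) = m" using sx p max_L01[OF m1] by simp
    have st: "{t. x @ [t] \<in> Asc_av (n+1) P} = {0, m, m+1}"
      using ext_L01[OF xm ne p a m1] S by blast
    have "pos_part (x @ [0]) = [1..<m+1]" using p by (simp add: pos_snoc)
    then have l1: "has_label (x @ [0]) L01" using m1 by auto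
    have "pos_part (x @ [m]) = [1..<m] @ replicate 2 m"
      using p m1 by (simp add: pos_snoc numeral_2_eq_2)
    then have l2: "has_label (x @ [m]) L011" using m1 by (metis has_label.simps(3) order_refl)
    have "pos_part (x @ [m+1]) = [1..<(m+1)+1]" using p by (simp add: pos_snoc)
    then have l3: "has_label (x @ [m+1]) L01" by (metis has_label.simps(2) le_add2)
    show ?thesis unfolding Let_def mx using u st h0 h1 h2 l1 l2 l3 by blast
  next
    fix m s assume m1: "1 \<le> m" and s2: "2 \<le> s" and p: "pos_part x = [1..<m] @ replicate s m"
      and a: "m \<le> asc x"
    have h0: "\<not> has_label x L0" using p m1 s2 not_L0 by simp
    have h1: "\<not> has_label x L01" using p not_both[OF s2] by (metis has_label.simps(2))
    have h2: "has_label x L011" using p m1 s2 by auto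
    have u: "\<exists>!L. has_label x L"
    proof (rule ex1I[of _ L011])
      show "has_label x L011" by (rule h2)
    next
      fix L' assume "has_label x L'" then show "L' = L011" using h0 h1 by (cases L') auto
    qed
    have mx: "Max (set x) = m" using sx p max_L011[OF m1 s2] by simp
    have st: "{t. x @ [t] \<in> Asc_av (n+1) P} = {0, m}"
      using ext_L011[OF xm ne p a m1 s2] S by blast
    have "pos_part (x @ [0]) = [1..<m] @ replicate s m" using p by (simp add: pos_snoc)
    then have l1: "has_label (x @ [0]) L011" using m1 s2 by auto
    have "pos_part (x @ [m]) = [1..<m] @ replicate (Suc s) m"
      using p m1 by (simp add: pos_snoc replicate_append_same)
    then have l2: "has_label (x @ [m]) L011" using m1 s2 by (metis has_label.simps(3) le_SucI)
    show ?thesis unfolding Let_def mx using u st h0 h1 h2 l1 l2 by blast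
  qed
qed

end
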